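(* Let $r,\sigma,s,c,\lambda,a>0$ with $a<\lambda$ and $1-\lambda r>0$, and let $\theta=\sqrt{2r/\sigma^2}$. Let $C_{11},C_{12}\in\mathbb{R}$ and $\bar x_1<x_1^*<\bar x_2$ be such that, with $\varphi_1(x)=C_{11}e^{\theta x}+C_{12}e^{-\theta x}+\frac{x-s}{r}$, $$\varphi_1'(x_1^* )=\lambda,\ \ \varphi_1''(x_1^* )\le0,\ \ \varphi_1'(\bar x_1)=\lambda,\ \ \varphi_1(\bar x_1)=\varphi_1(x_1^* )-c-\lambda(x_1^*-\bar x_1),\ \ \varphi_1(\bar x_2)=a\bar x_2 .$$ Define $$W_1(x)=\begin{cases}ax & x\ge\bar x_2\\ \varphi_1(x) & \bar x_1<x<\bar x_2\\ \varphi_1(x_1^* )-c-\lambda(x_1^*-x) & x\le\bar x_1,\end{cases}$$ and, for $x\in\mathbb{R}$, $\mathcal{M}W_1(x)=\sup_{\delta\ge0}\{W_1(x+\delta)-c-\lambda\delta\}$. Then for each $x\in\mathbb{R}$ the maximizer over $\delta\ge0$ of $W_1(x+\delta)-c-\lambda\delta$ is unique and equals $$\delta(x)=(x_1^*-x)\mathbf{1}_{(-\infty,x_1^*]}(x),$$ and moreover $$\{x:\mathcal{M}W_1(x)-W_1(x)<0\}=(\bar x_1,\infty),\qquad \{x:\mathcal{M}W_1(x)-W_1(x)=0\}=(-\infty,\bar x_1].$$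
   Context: This is the candidate equilibrium payoff of player P1 in a linear impulse controller–stopper game: state $X_t=x+\sigma W_t+\sum_{\tau_n\le t}\delta_n$, P1 pays $c+\lambda|\delta|$ per impulse $\delta\ge0$, and receives running payoff $x-s$ and terminal payoff $ax$, all discounted at rate $r$. *)

theory Defs
  imports "HOL-Analysis.Analysis"
begin

definition phi1 :: "real \<Rightarrow> real \<Rightarrow> real \<Rightarrow> real \<Rightarrow> real \<Rightarrow> real \<Rightarrow> real" where
  "phi1 theta r s C11 C12 x = C11 * exp (theta * x) + C12 * exp (- theta * x) + (x - s) / r"

definition W1 :: "(real \<Rightarrow> real) \<Rightarrow> real \<Rightarrow> real \<Rightarrow> real \<Rightarrow> real \<Rightarrow> real \<Rightarrow> real \<Rightarrow> real \<Rightarrow> real" where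
  "W1 phi a c lam xbar1 xstar xbar2 x =
     (if x \<ge> xbar2 then a * x
      else if xbar1 < x then phi x
      else phi xstar - c - lam * (xstar - x))"

definition MW :: "(real \<Rightarrow> real) \<Rightarrow> real \<Rightarrow> real \<Rightarrow> real \<Rightarrow> real" where
  "MW W c lam x = (SUP d\<in>{0..}. W (x + d) - c - lam * d)"

end

theory Submission
  imports Defs
begin

theorem lemmaA1:
  fixes r sigma s c lam a C11 C12 xbar1 xstar xbar2 :: real
  defines "theta \<equiv> sqrt (2 * r / sigma\<^sup>2)"
  defines "\<phi> \<equiv> phi1 theta r s C11 C12"
  defines "W \<equiv> W1 \<phi> a c lam xbar1 xstar xbar2"
  assumes pos: "r > 0" "sigma > 0" "s > 0" "c > 0" "lam > 0" "a > 0"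
    and alam: "a < lam" and lamr: "1 - lam * r > 0"
    and ord: "xbar1 < xstar" "xstar < xbar2"
    and d1: "deriv \<phi> xstar = lam"
    and d2: "deriv (deriv \<phi>) xstar \<le> 0"
    and d3: "deriv \<phi> xbar1 = lam"
    and v1: "\<phi> xbar1 = \<phi> xstar - c - lam * (xstar - xbar1)"
    and v2: "\<phi> xbar2 = a * xbar2"
  shows "(\<forall>x. {d. d \<ge> 0 \<and> (\<forall>d'\<ge>0. W (x + d') - c - lam * d' \<le> W (x + d) - c - lam * d)}
               = {(xstar - x) * indicator {..xstar} x})
         \<and> {x. MW W c lam x - W x < 0} = {xbar1<..}
         \<and> {x. MW W c lam x - W x = 0} = {..xbar1}"
proof -
  have th: "theta > 0" using pos by (simp add: theta_def)
  define D where "D x = theta*C11*exp(theta*x) - theta*C12/exp(theta*x) + 1/r" for x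
  have phid: "(\<phi> has_real_derivative D x) (at x)" for x
    unfolding \<phi>_def phi1_def D_def
    using pos(1) by (auto intro!: derivative_eq_intros simp: exp_minus divide_simps) (simp add: algebra_simps)
  have dphi: "deriv \<phi> x = D x" for x using phid DERIV_imp_deriv by blast
  define A where "A = exp (theta*xbar1)"
  define B where "B = exp (theta*xstar)"
  have A0: "A > 0" and AB: "A < B" using th ord by (auto simp: A_def B_def)
  have e1: "theta*C11*B - theta*C12/B + 1/r = lam" using d1 dphi D_def B_def by simp
  have e2: "theta*C11*A - theta*C12/A + 1/r = lam" using d3 dphi D_def A_def by simp
  have "theta*(B-A)*(C11 + C12/(A*B)) = (theta*C11*B - theta*C12/B) - (theta*C11*A - theta*C12/A)"
    using A0 AB by (simp add: field_simps)
  also have "\<dots> = 0" using e1 e2 by linarith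
  finally have "theta*(B-A)*(C11 + C12/(A*B)) = 0" .
  hence p: "C11 = - C12/(A*B)" using th AB by (simp add: eq_neg_iff_add_eq_0)
  have "1/r > lam" using lamr pos by (simp add: field_simps)
  hence "theta*C11*B - theta*C12/B < 0" using e1 by linarith
  hence "C12 * (theta*(1/A + 1/B)) > 0" using p A0 AB by (simp add: field_simps)
  moreover have "theta*(1/A + 1/B) > 0" using th A0 AB by (intro mult_pos_pos add_pos_pos) auto
  ultimately have q: "C12 > 0" using zero_less_mult_pos2 by blast
  have Dform: "D y - lam = - theta*C12*(exp(theta*y)-A)*(exp(theta*y)-B)/(A*B*exp(theta*y))" for y
  proof -
    have "D y - lam = theta*C11*exp(theta*y) - theta*C12/exp(theta*y) - (theta*C11*B - theta*C12/B)"
      unfolding D_def using e1 by linarith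
    also have "\<dots> = - theta*C12*(exp(theta*y)-A)*(exp(theta*y)-B)/(A*B*exp(theta*y))"
      unfolding p using A0 AB by (simp add: field_simps)
    finally show ?thesis .
  qed
  have Dpos: "D y - lam > 0" if "xbar1 < y" "y < xstar" for y
  proof -
    have "A < exp(theta*y)" "exp(theta*y) < B" using that th by (auto simp: A_def B_def)
    hence "theta*C12*(exp(theta*y)-A)*(B-exp(theta*y))/(A*B*exp(theta*y)) > 0"
      using th q A0 by (intro divide_pos_pos mult_pos_pos) auto
    thus ?thesis using Dform[of y] by (simp add: algebra_simps)
  qed
  have Dneg: "D y - lam < 0" if "xstar < y" for y
  proof -
    have "A < exp(theta*y)" "B < exp(theta*y)" using that th ord by (auto simp: A_def B_def)
    hence "theta*C12*(exp(theta*y)-A)*(exp(theta*y)-B)/(A*B*exp(theta*y)) > 0"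
      using th q A0 AB by (intro divide_pos_pos mult_pos_pos) auto
    moreover have "D y - lam = - (theta*C12*(exp(theta*y)-A)*(exp(theta*y)-B)/(A*B*exp(theta*y)))" using Dform[of y] by simp
    ultimately show ?thesis by linarith
  qed
  define G where "G y = \<phi> y - lam*y" for y
  have Gd: "(G has_real_derivative (D y - lam)) (at y)" for y
    unfolding G_def by (auto intro!: derivative_eq_intros phid)
  have Gc: "continuous_on S G" for S
    using Gd by (meson DERIV_isCont continuous_at_imp_continuous_on)
  have Ginc: "G u < G w" if "xbar1 \<le> u" "u < w" "w \<le> xstar" for u w
    using that Gd Dpos by (intro DERIV_pos_imp_increasing_open[OF \<open>u < w\<close> _ Gc]) force
  have Gdec: "G w < G u" if "xstar \<le> u" "u < w" for u w
    using that Gd Dneg by (intro DERIV_neg_imp_decreasing_open[OF \<open>u < w\<close> _ Gc]) force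
  define g where "g y = W y - lam*y" for y
  have g1: "g y = G xbar1" if "y \<le> xbar1" for y
    using that ord v1 unfolding g_def W_def W1_def G_def by (auto simp: algebra_simps)
  have g2: "g y = G y" if "xbar1 < y" "y < xbar2" for y
    using that unfolding g_def W_def W1_def G_def by auto
  have g3: "g y = (a - lam)*y" if "xbar2 \<le> y" for y
    using that unfolding g_def W_def W1_def G_def by (auto simp: algebra_simps)
  have G2: "G xbar2 = (a - lam)*xbar2" using v2 unfolding G_def by (simp add: algebra_simps)
  have Gbar: "G xbar1 = G xstar - c" using v1 unfolding G_def by (simp add: algebra_simps)
  have key2: "g w < g u" if "xstar \<le> u" "u < w" for u w
  proof (cases "w < xbar2")
    case True
    then show ?thesis using that ord g2 Gdec by auto
  next
    case False
    show ?thesis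
    proof (cases "xbar2 \<le> u")
      case True
      then show ?thesis using that g3 alam by (auto simp: mult_strict_left_mono_neg)
    next
      case F2: False
      have "g w = (a - lam)*w" using False g3 by auto
      also have "\<dots> \<le> (a-lam)*xbar2" using False alam by (intro mult_left_mono_neg) auto
      also have "\<dots> = G xbar2" using G2 by simp
      also have "\<dots> < G u" using F2 that Gdec by auto
      also have "\<dots> = g u" using F2 that ord g2 by auto
      finally show ?thesis .
    qed
  qed
  have gstar: "g xstar = G xstar" using ord g2 by auto
  have key1: "g y < g xstar" if ny: "y \<noteq> xstar" for y
  proof -
    consider "y \<le> xbar1" | "xbar1 < y" "y < xstar" | "xstar < y" using ny by linarith
    then show ?thesis
    proof cases
      case 1 then show ?thesis using g1 gstar Ginc[of xbar1 xstar] ord by auto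
    next
      case 2 then show ?thesis using g2 gstar Ginc[of y xstar] ord by auto
    next
      case 3 then show ?thesis using key2[of xstar y] by auto
    qed
  qed
  have opt: "g y < g (max x xstar)" if "x \<le> y" "y \<noteq> max x xstar" for x y
  proof (cases "x \<le> xstar")
    case True then show ?thesis using that key1 by (simp add: max_def)
  next
    case False then show ?thesis using that key2[of x y] by (simp add: max_def)
  qed
  have Weq: "W (x+d) - c - lam*d = g (x+d) + lam*x - c" for x d
    by (simp add: g_def algebra_simps)
  have part1: "{d. d \<ge> 0 \<and> (\<forall>d'\<ge>0. W (x + d') - c - lam * d' \<le> W (x + d) - c - lam * d)}
               = {(xstar - x) * indicator {..xstar} x}" for x
  proof -
    have ind: "(xstar - x) * indicator {..xstar} x = max x xstar - x"
      by (auto simp: indicator_def max_def)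
    have "d \<ge> 0 \<and> (\<forall>d'\<ge>0. g (x + d') \<le> g (x + d)) \<longleftrightarrow> d = max x xstar - x" for d
    proof
      assume H: "d \<ge> 0 \<and> (\<forall>d'\<ge>0. g (x + d') \<le> g (x + d))"
      show "d = max x xstar - x"
      proof (rule ccontr)
        assume "d \<noteq> max x xstar - x"
        hence "g (x+d) < g (max x xstar)" using H opt[of x "x+d"] by auto
        moreover have "g (x + (max x xstar - x)) \<le> g (x+d)" using H by (metis add.commute diff_add_cancel diff_ge_0_iff_ge max.cobounded1)
        ultimately show False by simp
      qed
    next
      assume "d = max x xstar - x"
      show "d \<ge> 0 \<and> (\<forall>d'\<ge>0. g (x + d') \<le> g (x + d))"
      proof (intro conjI allI impI)
        show "d \<ge> 0" using \<open>d = max x xstar - x\<close> by simp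
        fix d' :: real assume "d' \<ge> 0"
        show "g (x + d') \<le> g (x + d)"
          using opt[of x "x+d'"] \<open>d' \<ge> 0\<close> \<open>d = max x xstar - x\<close>
          by (cases "x + d' = max x xstar") auto
      qed
    qed
    thus ?thesis unfolding Weq ind by auto
  qed
  have MWeq: "MW W c lam x = g (max x xstar) + lam*x - c" for x
  proof -
    have "MW W c lam x = Sup ((\<lambda>d. g (x+d) + lam*x - c) ` {0..})"
      unfolding MW_def Weq by simp
    also have "\<dots> = g (max x xstar) + lam*x - c"
    proof (rule cSup_eq_maximum)
      show "g (max x xstar) + lam*x - c \<in> (\<lambda>d. g (x+d) + lam*x - c) ` {0..}"
        by (rule image_eqI[of _ _ "max x xstar - x"]) auto
      fix z assume "z \<in> (\<lambda>d. g (x+d) + lam*x - c) ` {0..}"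
      then obtain d where "d \<ge> 0" "z = g (x+d) + lam*x - c" by auto
      thus "z \<le> g (max x xstar) + lam*x - c"
        using opt[of x "x+d"] by (cases "x + d = max x xstar") auto
    qed
    finally show ?thesis .
  qed
  have diff: "MW W c lam x - W x = g (max x xstar) - c - g x" for x
    unfolding MWeq g_def by simp
  have val0: "MW W c lam x - W x = 0" if "x \<le> xbar1" for x
    using that ord diff[of x] g1[of x] gstar Gbar by (simp add: max_def)
  have valneg: "MW W c lam x - W x < 0" if "xbar1 < x" for x
  proof (cases "x \<le> xstar")
    case True
    then have "g x = G x" using that ord g2 by auto
    moreover have "G xbar1 < G x \<or> x = xbar1" using True that Ginc[of xbar1 x] by force
    ultimately show ?thesis using that True diff[of x] gstar Gbar by (simp add: max_def)
  next
    case False then show ?thesis using diff[of x] pos by (simp add: max_def)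
  qed
  have "{x. MW W c lam x - W x < 0} = {xbar1<..}"
    using val0 valneg by (auto simp: not_less[symmetric]) (metis less_irrefl not_less)
  moreover have "{x. MW W c lam x - W x = 0} = {..xbar1}"
    using val0 valneg by (auto simp: not_less[symmetric]) (metis less_irrefl not_less)
  ultimately show ?thesis using part1 by blast
qed
end
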